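(* Let $W\in\{\mathrm{A}_{\frac12\infty},\mathrm{D}_{\frac12\infty}\}$ and $\lambda\in\mathbb{C}$, and set $\check H_{W,\lambda}=\{\xi\in\check H_{W,\mathbb{C}}:\dot I_W(\xi)=\lambda\xi\}$, $\overline H_{W,\lambda}=\check H_{W,\lambda}\cap\overline H_{W,\mathbb{C}}$. Then $\dim_{\mathbb{C}}\check H_{W,\lambda}=1$ and $\dim_{\mathbb{C}}\overline H_{W,\lambda}=0$, except in the case $W=\mathrm{D}_{\frac12\infty}$, $\lambda=2$, where $\dim_{\mathbb{C}}\check H_{W,2}=2$, $\dim_{\mathbb{C}}\overline H_{W,2}=1$, and $\overline H_{W,2}$ is spanned by $\gamma_{c_0^+}-\gamma_{c_0^-}$.
   Context: Index sets: $C_{W,0}=\{c_0^{(n)}:n\ge1\}$ (type $\mathrm{A}_{\frac12\infty}$) or $\{c_0^{(n)}:n\ge1\}\cup\{c_0^+,c_0^-\}$ (type $\mathrm{D}_{\frac12\infty}$); $C_{W,1}=\{c_1^{(n)}:n\ge1\}$; $C_W=C_{W,0}\sqcup C_{W,1}$. Adjacency: $c_0^{(n)}$ is adjacent to $c_1^{(n)}$ and $c_1^{(n+1)}$ ($n\ge1$); in type D, $c_0^\pm$ are adjacent to $c_1^{(1)}$; no others. $\overline H_{W,\mathbb{C}}$ is the Hilbert space $\ell^2(C_W)$ with orthonormal basis $\{\gamma_c\}$, and $\check H_{W,\mathbb{C}}=\prod_{c\in C_W}\mathbb{C}\gamma_c$ is the space of all formal sums $\sum a_c\gamma_c$. $I_W$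 is the symmetric form with $I_W(\gamma_c,\gamma_c)=2$, $I_W(\gamma_c,\gamma_{c'})=-1$ if $c,c'$ adjacent, $0$ otherwise (i.e. $I_W=J_W+{}^tJ_W$, the intersection form for suspension dimension $d\equiv0\bmod 4$), and $\dot I_W(\xi)=\sum_{c}I_W(\xi,\gamma_c)\gamma_c$, which is well defined on $\check H_{W,\mathbb{C}}$ since each index has finitely many neighbours. *)

theory Defs
  imports "HOL-Analysis.Analysis" "HOL-Library.Function_Algebras"
begin

datatype wtype = A_half_inf | D_half_inf

text \<open>Indices: c0 n = c_0^{(n)}, c1 n = c_1^{(n)} (meaningful for n >= 1),
  c0p = c_0^+, c0m = c_0^-.\<close>
datatype cidx = c0 nat | c1 nat | c0p | c0m

definition CW0 :: "wtype \<Rightarrow> cidx set" where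
  "CW0 W = {c0 n | n. n \<ge> 1} \<union> (if W = D_half_inf then {c0p, c0m} else {})"

definition CW1 :: "wtype \<Rightarrow> cidx set" where
  "CW1 W = {c1 n | n. n \<ge> 1}"

definition CW :: "wtype \<Rightarrow> cidx set" where
  "CW W = CW0 W \<union> CW1 W"

definition adj0 :: "wtype \<Rightarrow> cidx \<Rightarrow> cidx \<Rightarrow> bool" where
  "adj0 W x y \<longleftrightarrow>
     (\<exists>n\<ge>1. x = c0 n \<and> (y = c1 n \<or> y = c1 (n + 1)))
     \<or> (W = D_half_inf \<and> (x = c0p \<or> x = c0m) \<and> y = c1 1)"

definition adjacent :: "wtype \<Rightarrow> cidx \<Rightarrow> cidx \<Rightarrow> bool" where
  "adjacent W x y \<longleftrightarrow> adj0 W x y \<or> adj0 W y x"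

definition neighbours :: "wtype \<Rightarrow> cidx \<Rightarrow> cidx set" where
  "neighbours W c = {c'. adjacent W c c'}"

text \<open>Formal sums sum_{c in C_W} a_c gamma_c, represented by their coefficient functions
  (zero outside C_W).\<close>
definition Hcheck :: "wtype \<Rightarrow> (cidx \<Rightarrow> complex) set" where
  "Hcheck W = {\<xi>. \<forall>c. c \<notin> CW W \<longrightarrow> \<xi> c = 0}"

definition Hbar :: "wtype \<Rightarrow> (cidx \<Rightarrow> complex) set" where
  "Hbar W = {\<xi> \<in> Hcheck W. (\<lambda>c. (cmod (\<xi> c))\<^sup>2) summable_on CW W}"

definition gamma :: "cidx \<Rightarrow> (cidx \<Rightarrow> complex)" where
  "gamma c = (\<lambda>c'. if c' = c then 1 else 0)"

definition IW :: "wtype \<Rightarrow> cidx \<Rightarrow> cidx \<Rightarrow> complex" where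
  "IW W c c' = (if c = c' then 2 else if adjacent W c c' then -1 else 0)"

text \<open>dot I_W(xi) = sum_c I_W(xi, gamma_c) gamma_c, where
  I_W(xi, gamma_c) = sum_{c'} xi_{c'} I_W(gamma_{c'}, gamma_c) is a finite sum over
  c and its neighbours.\<close>
definition Idot :: "wtype \<Rightarrow> (cidx \<Rightarrow> complex) \<Rightarrow> (cidx \<Rightarrow> complex)" where
  "Idot W \<xi> = (\<lambda>c. if c \<in> CW W
      then (\<Sum>c' \<in> insert c (neighbours W c). \<xi> c' * IW W c' c) else 0)"

definition cscale :: "complex \<Rightarrow> (cidx \<Rightarrow> complex) \<Rightarrow> (cidx \<Rightarrow> complex)" where
  "cscale a f = (\<lambda>x. a * f x)"

definition Hcheck_eig :: "wtype \<Rightarrow> complex \<Rightarrow> (cidx \<Rightarrow> complex) set" where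
  "Hcheck_eig W l = {\<xi> \<in> Hcheck W. Idot W \<xi> = cscale l \<xi>}"

definition Hbar_eig :: "wtype \<Rightarrow> complex \<Rightarrow> (cidx \<Rightarrow> complex) set" where
  "Hbar_eig W l = Hcheck_eig W l \<inter> Hbar W"

definition cdim :: "(cidx \<Rightarrow> complex) set \<Rightarrow> nat" where
  "cdim S = vector_space.dim cscale S"

definition cspan :: "(cidx \<Rightarrow> complex) set \<Rightarrow> (cidx \<Rightarrow> complex) set" where
  "cspan S = module.span cscale S"

end

theory Submission imports Defs begin

interpretation V: vector_space cscale
  by unfold_locales (auto simp: cscale_def fun_eq_iff algebra_simps)

lemma CW_simps[simp]:
  "c0 m \<in> CW W \<longleftrightarrow> m \<ge> 1" "c1 m \<in> CW W \<longleftrightarrow> m \<ge> 1"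
  "c0p \<in> CW W \<longleftrightarrow> W = D_half_inf" "c0m \<in> CW W \<longleftrightarrow> W = D_half_inf"
  by (auto simp: CW_def CW0_def CW1_def)

lemma nb_c0: "neighbours W (c0 n) = (if n \<ge> 1 then {c1 n, c1 (Suc n)} else {})"
  by (auto simp: neighbours_def adjacent_def adj0_def)

lemma nb_c1: "neighbours W (c1 n) = (if n \<ge> 1 then {c0 n} else {}) \<union> (if n \<ge> 2 then {c0 (n-1)} else {})
   \<union> (if W = D_half_inf \<and> n = 1 then {c0p, c0m} else {})"
  by (auto simp: neighbours_def adjacent_def adj0_def)

lemma nb_c0p: "neighbours W c0p = (if W = D_half_inf then {c1 1} else {})"
  by (auto simp: neighbours_def adjacent_def adj0_def)

lemma nb_c0m: "neighbours W c0m = (if W = D_half_inf then {c1 1} else {})"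
  by (auto simp: neighbours_def adjacent_def adj0_def)

lemma adj_simps[simp]:
  "adjacent W (c0 n) (c1 m) \<longleftrightarrow> n \<ge> 1 \<and> (m = n \<or> m = Suc n)"
  "adjacent W (c1 m) (c0 n) \<longleftrightarrow> n \<ge> 1 \<and> (m = n \<or> m = Suc n)"
  "adjacent W c0p (c1 m) \<longleftrightarrow> W = D_half_inf \<and> m = 1"
  "adjacent W c0m (c1 m) \<longleftrightarrow> W = D_half_inf \<and> m = 1"
  "adjacent W (c1 m) c0p \<longleftrightarrow> W = D_half_inf \<and> m = 1"
  "adjacent W (c1 m) c0m \<longleftrightarrow> W = D_half_inf \<and> m = 1"
  by (auto simp: adjacent_def adj0_def)

lemma Idot_c0: "m \<ge> 1 \<Longrightarrow> Idot W \<xi> (c0 m) = 2 * \<xi> (c0 m) - \<xi> (c1 m) - \<xi> (c1 (Suc m))"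
  by (simp add: Idot_def nb_c0 IW_def)

lemma Idot_c1: "m \<ge> 1 \<Longrightarrow> Idot W \<xi> (c1 m) = 2 * \<xi> (c1 m) - \<xi> (c0 m) - (if m \<ge> 2 then \<xi> (c0 (m-1)) else 0)
   - (if W = D_half_inf \<and> m = 1 then \<xi> c0p + \<xi> c0m else 0)"
  apply (cases "m = 1")
   apply (cases W; simp add: Idot_def nb_c1 IW_def)
  apply (simp add: Idot_def nb_c1 IW_def)
  done

lemma Idot_c0p: "Idot W \<xi> c0p = (if W = D_half_inf then 2 * \<xi> c0p - \<xi> (c1 1) else 0)"
  by (simp add: Idot_def nb_c0p IW_def)

lemma Idot_c0m: "Idot W \<xi> c0m = (if W = D_half_inf then 2 * \<xi> c0m - \<xi> (c1 1) else 0)"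
  by (simp add: Idot_def nb_c0m IW_def)


definition pos :: "nat \<Rightarrow> cidx" where
  "pos k = (if even k then c0 (k div 2) else c1 ((k+1) div 2))"

lemma pos_even[simp]: "pos (2*m) = c0 m" and pos_odd[simp]: "pos (Suc (2*m)) = c1 (Suc m)"
  by (auto simp: pos_def)

lemma inj_pos: "inj pos"
proof
  fix x y assume "pos x = pos y"
  then show "x = y" unfolding pos_def
    by (auto split: if_splits elim!: evenE oddE)
qed

definition seqof :: "wtype \<Rightarrow> (cidx \<Rightarrow> complex) \<Rightarrow> nat \<Rightarrow> complex" where
  "seqof W \<xi> k = (if k = 0 then (if W = D_half_inf then \<xi> c0p + \<xi> c0m else 0) else \<xi> (pos k))"

fun rec :: "complex \<Rightarrow> complex \<Rightarrow> complex \<Rightarrow> nat \<Rightarrow> complex" where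
  "rec \<mu> a b 0 = a" | "rec \<mu> a b (Suc 0) = b"
| "rec \<mu> a b (Suc (Suc k)) = \<mu> * rec \<mu> a b (Suc k) - rec \<mu> a b k"

lemma rec_unique:
  assumes "\<And>k. y (Suc (Suc k)) = \<mu> * y (Suc k) - y k"
  shows "y k = rec \<mu> (y 0) (y 1) k"
proof -
  have "y k = rec \<mu> (y 0) (y 1) k \<and> y (Suc k) = rec \<mu> (y 0) (y 1) (Suc k)"
    by (induction k) (auto simp: assms)
  then show ?thesis by blast
qed

lemma rec_lin: "rec \<mu> a b k = a * rec \<mu> 1 0 k + b * rec \<mu> 0 1 k"
proof -
  have "rec \<mu> a b k = a * rec \<mu> 1 0 k + b * rec \<mu> 0 1 k \<and>
        rec \<mu> a b (Suc k) = a * rec \<mu> 1 0 (Suc k) + b * rec \<mu> 0 1 (Suc k)"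
    by (induction k) (auto simp: algebra_simps)
  then show ?thesis by blast
qed

lemma rec_zero[simp]: "rec \<mu> 0 0 k = 0"
  by (subst rec_lin) simp

lemma eig_iff:
  "\<xi> \<in> Hcheck_eig W l \<longleftrightarrow> \<xi> \<in> Hcheck W \<and>
     (\<forall>k. seqof W \<xi> (Suc (Suc k)) = (2-l) * seqof W \<xi> (Suc k) - seqof W \<xi> k) \<and>
     (W = D_half_inf \<longrightarrow> (2-l) * \<xi> c0p = \<xi> (c1 1) \<and> (2-l) * \<xi> c0m = \<xi> (c1 1))"
proof
  assume A: "\<xi> \<in> Hcheck_eig W l"
  then have H: "\<xi> \<in> Hcheck W" and E: "\<And>c. Idot W \<xi> c = l * \<xi> c"
    by (auto simp: Hcheck_eig_def cscale_def fun_eq_iff)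
  have z: "\<xi> (c0 0) = 0" "\<xi> (c1 0) = 0" using H by (auto simp: Hcheck_def)
  have R: "seqof W \<xi> (Suc (Suc k)) = (2-l) * seqof W \<xi> (Suc k) - seqof W \<xi> k" for k
  proof (cases "even k")
    case True
    then obtain m where k: "k = 2*m" by (auto elim: evenE)
    have "seqof W \<xi> (Suc (Suc k)) = \<xi> (c0 (Suc m))" using k by (simp add: seqof_def pos_def)
    moreover have "seqof W \<xi> (Suc k) = \<xi> (c1 (Suc m))" using k by (simp add: seqof_def pos_def)
    moreover have "seqof W \<xi> k = (if m = 0 then (if W = D_half_inf then \<xi> c0p + \<xi> c0m else 0) else \<xi> (c0 m))"
      using k by (simp add: seqof_def pos_def)
    moreover note E[of "c1 (Suc m)"]
    ultimately show ?thesis using z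
      by (cases "m = 0") (auto simp: Idot_c1 algebra_simps)
  next
    case False
    then obtain m where k: "k = Suc (2*m)" by (auto elim: oddE)
    have "seqof W \<xi> (Suc (Suc k)) = \<xi> (c1 (Suc (Suc m)))" using k by (simp add: seqof_def pos_def)
    moreover have "seqof W \<xi> (Suc k) = \<xi> (c0 (Suc m))" using k by (simp add: seqof_def pos_def)
    moreover have "seqof W \<xi> k = \<xi> (c1 (Suc m))"
      using k by (simp add: seqof_def pos_def)
    moreover note E[of "c0 (Suc m)"]
    ultimately show ?thesis using z
      by (auto simp: Idot_c0 algebra_simps)
  qed
  have "W = D_half_inf \<longrightarrow> (2-l) * \<xi> c0p = \<xi> (c1 1) \<and> (2-l) * \<xi> c0m = \<xi> (c1 1)"
    using E[of c0p] E[of c0m] by (auto simp: Idot_c0p Idot_c0m algebra_simps)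
  then show "\<xi> \<in> Hcheck W \<and>
     (\<forall>k. seqof W \<xi> (Suc (Suc k)) = (2-l) * seqof W \<xi> (Suc k) - seqof W \<xi> k) \<and>
     (W = D_half_inf \<longrightarrow> (2-l) * \<xi> c0p = \<xi> (c1 1) \<and> (2-l) * \<xi> c0m = \<xi> (c1 1))"
    using H R by blast
next
  assume A: "\<xi> \<in> Hcheck W \<and>
     (\<forall>k. seqof W \<xi> (Suc (Suc k)) = (2-l) * seqof W \<xi> (Suc k) - seqof W \<xi> k) \<and>
     (W = D_half_inf \<longrightarrow> (2-l) * \<xi> c0p = \<xi> (c1 1) \<and> (2-l) * \<xi> c0m = \<xi> (c1 1))"
  then have H: "\<xi> \<in> Hcheck W"
    and R: "\<And>k. seqof W \<xi> (Suc (Suc k)) = (2-l) * seqof W \<xi> (Suc k) - seqof W \<xi> k"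
    and D: "W = D_half_inf \<Longrightarrow> (2-l) * \<xi> c0p = \<xi> (c1 1) \<and> (2-l) * \<xi> c0m = \<xi> (c1 1)"
    by auto
  have z: "\<And>c. c \<notin> CW W \<Longrightarrow> \<xi> c = 0" using H by (auto simp: Hcheck_def)
  have "Idot W \<xi> c = l * \<xi> c" for c
  proof (cases c)
    case (c0 n)
    show ?thesis
    proof (cases n)
      case 0 then show ?thesis using c0 z[of c] by (simp add: Idot_def)
    next
      case (Suc m)
      have h1: "seqof W \<xi> (Suc (Suc (Suc (2*m)))) = \<xi> (c1 (Suc (Suc m)))"
        using pos_odd[of "Suc m"] by (simp add: seqof_def)
      have h2: "seqof W \<xi> (Suc (Suc (2*m))) = \<xi> (c0 (Suc m))"
        using pos_even[of "Suc m"] by (simp add: seqof_def)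
      have h3: "seqof W \<xi> (Suc (2*m)) = \<xi> (c1 (Suc m))"
        by (simp add: seqof_def)
      have R': "\<xi> (c1 (Suc (Suc m))) = (2-l) * \<xi> (c0 (Suc m)) - \<xi> (c1 (Suc m))"
        using R[of "Suc (2*m)"] by (simp only: h1 h2 h3)
      show ?thesis unfolding c0 Suc using Idot_c0[of "Suc m" W \<xi>] R'
        by (simp add: algebra_simps)
    qed
  next
    case (c1 n)
    show ?thesis
    proof (cases n)
      case 0 then show ?thesis using c1 z[of c] by (simp add: Idot_def)
    next
      case (Suc m)
      have h2: "seqof W \<xi> (Suc (Suc (2*m))) = \<xi> (c0 (Suc m))"
        using pos_even[of "Suc m"] by (simp add: seqof_def)
      have h3: "seqof W \<xi> (Suc (2*m)) = \<xi> (c1 (Suc m))"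
        by (simp add: seqof_def)
      have h4: "seqof W \<xi> (2*m) = (if m = 0 then (if W = D_half_inf then \<xi> c0p + \<xi> c0m else 0) else \<xi> (c0 m))"
        by (simp add: seqof_def)
      have R': "\<xi> (c0 (Suc m)) = (2-l) * \<xi> (c1 (Suc m)) - (if m = 0 then (if W = D_half_inf then \<xi> c0p + \<xi> c0m else 0) else \<xi> (c0 m))"
        using R[of "2*m"] by (simp only: h2 h3 h4)
      have I: "Idot W \<xi> (c1 (Suc m)) = 2 * \<xi> (c1 (Suc m)) - \<xi> (c0 (Suc m)) - (if 2 \<le> Suc m then \<xi> (c0 (Suc m - 1)) else 0)
   - (if W = D_half_inf \<and> Suc m = 1 then \<xi> c0p + \<xi> c0m else 0)"
        by (rule Idot_c1) simp
      show ?thesis unfolding c1 Suc I R'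
        by (cases "m = 0"; cases W) (simp_all add: algebra_simps)
    qed
  next
    case c0p then show ?thesis using D z[of c] by (cases W) (auto simp: Idot_c0p algebra_simps)
  next
    case c0m then show ?thesis using D z[of c] by (cases W) (auto simp: Idot_c0m algebra_simps)
  qed
  then show "\<xi> \<in> Hcheck_eig W l" using H by (auto simp: Hcheck_eig_def cscale_def)
qed


definition build :: "wtype \<Rightarrow> complex \<Rightarrow> complex \<Rightarrow> complex \<Rightarrow> complex \<Rightarrow> cidx \<Rightarrow> complex" where
  "build W \<mu> a b x1 = (\<lambda>c. case c of
      c0 m \<Rightarrow> if m \<ge> 1 then rec \<mu> (a+b) x1 (2*m) else 0
    | c1 m \<Rightarrow> if m \<ge> 1 then rec \<mu> (a+b) x1 (2*m-1) else 0
    | c0p \<Rightarrow> if W = D_half_inf then a else 0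
    | c0m \<Rightarrow> if W = D_half_inf then b else 0)"

lemma seqof_build:
  assumes "W = A_half_inf \<longrightarrow> a = 0 \<and> b = 0"
  shows "seqof W (build W \<mu> a b x1) k = rec \<mu> (a+b) x1 k"
proof (cases "k = 0")
  case True then show ?thesis using assms by (cases W) (auto simp: seqof_def build_def)
next
  case False
  show ?thesis
  proof (cases "even k")
    case True
    then obtain m where k: "k = 2*m" by (auto elim: evenE)
    with False have "m \<ge> 1" by simp
    then show ?thesis using k False by (simp add: seqof_def build_def)
  next
    case F2: False
    then obtain m where k: "k = Suc (2*m)" by (auto elim: oddE)
    have "2 * Suc m - 1 = Suc (2*m)" by simp
    then show ?thesis using k by (simp add: seqof_def build_def)
  qed
qed

lemma build_Hcheck: "build W \<mu> a b x1 \<in> Hcheck W"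
  unfolding Hcheck_def
proof (intro CollectI allI impI)
  fix c assume "c \<notin> CW W" then show "build W \<mu> a b x1 c = 0"
    by (cases c) (auto simp: build_def)
qed

lemma char:
  "Hcheck_eig W l = {build W (2-l) a b x1 | a b x1.
     (W = D_half_inf \<longrightarrow> (2-l)*a = x1 \<and> (2-l)*b = x1) \<and> (W = A_half_inf \<longrightarrow> a = 0 \<and> b = 0)}"
proof (intro set_eqI iffI)
  fix \<xi> assume "\<xi> \<in> Hcheck_eig W l"
  then have H: "\<xi> \<in> Hcheck W" and R: "\<And>k. seqof W \<xi> (Suc (Suc k)) = (2-l) * seqof W \<xi> (Suc k) - seqof W \<xi> k"
    and D: "W = D_half_inf \<longrightarrow> (2-l) * \<xi> c0p = \<xi> (c1 1) \<and> (2-l) * \<xi> c0m = \<xi> (c1 1)"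
    unfolding eig_iff by blast+
  have z: "\<And>c. c \<notin> CW W \<Longrightarrow> \<xi> c = 0" using H by (auto simp: Hcheck_def)
  define a where "a = \<xi> c0p"
  define b where "b = \<xi> c0m"
  define x1 where "x1 = \<xi> (c1 1)"
  have A: "W = A_half_inf \<longrightarrow> a = 0 \<and> b = 0" using z[of c0p] z[of c0m] by (auto simp: a_def b_def)
  have s0: "seqof W \<xi> 0 = a + b" using A by (cases W) (auto simp: seqof_def a_def b_def)
  have s1: "seqof W \<xi> 1 = x1" using pos_odd[of 0] by (simp add: seqof_def x1_def)
  have S: "seqof W \<xi> k = rec (2-l) (a+b) x1 k" for k
  proof -
    have "seqof W \<xi> k = rec (2-l) (seqof W \<xi> 0) (seqof W \<xi> 1) k" by (rule rec_unique[of "seqof W \<xi>" "2-l", OF R])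
    then show ?thesis by (simp only: s0 s1)
  qed
  have "\<xi> = build W (2-l) a b x1"
  proof
    fix c show "\<xi> c = build W (2-l) a b x1 c"
    proof (cases c)
      case (c0 n)
      show ?thesis
      proof (cases n)
        case 0 then show ?thesis using c0 z[of c] by (simp add: build_def)
      next
        case (Suc m)
        have "seqof W \<xi> (2 * Suc m) = \<xi> (c0 (Suc m))" by (simp only: seqof_def pos_even) simp
        then show ?thesis using S[of "2 * Suc m"] c0 Suc by (simp add: build_def)
      qed
    next
      case (c1 n)
      show ?thesis
      proof (cases n)
        case 0 then show ?thesis using c1 z[of c] by (simp add: build_def)
      next
        case (Suc m)
        have "seqof W \<xi> (Suc (2 * m)) = \<xi> (c1 (Suc m))" by (simp add: seqof_def)
        moreover have "2 * Suc m - 1 = Suc (2*m)" by simp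
        ultimately show ?thesis using S[of "Suc (2 * m)"] c1 Suc by (simp add: build_def)
      qed
    next
      case c0p then show ?thesis using z[of c] by (cases W) (auto simp: build_def a_def)
    next
      case c0m then show ?thesis using z[of c] by (cases W) (auto simp: build_def b_def)
    qed
  qed
  moreover have "W = D_half_inf \<longrightarrow> (2-l)*a = x1 \<and> (2-l)*b = x1" using D by (simp add: a_def b_def x1_def)
  ultimately show "\<xi> \<in> {build W (2-l) a b x1 | a b x1.
     (W = D_half_inf \<longrightarrow> (2-l)*a = x1 \<and> (2-l)*b = x1) \<and> (W = A_half_inf \<longrightarrow> a = 0 \<and> b = 0)}"
    using A by blast
next
  fix \<xi> assume "\<xi> \<in> {build W (2-l) a b x1 | a b x1.
     (W = D_half_inf \<longrightarrow> (2-l)*a = x1 \<and> (2-l)*b = x1) \<and> (W = A_half_inf \<longrightarrow> a = 0 \<and> b = 0)}"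
  then obtain a b x1 where xi: "\<xi> = build W (2-l) a b x1"
    and D: "W = D_half_inf \<longrightarrow> (2-l)*a = x1 \<and> (2-l)*b = x1" and A: "W = A_half_inf \<longrightarrow> a = 0 \<and> b = 0"
    by blast
  have S: "\<And>k. seqof W \<xi> k = rec (2-l) (a+b) x1 k" using seqof_build[OF A] xi by simp
  have "\<xi> \<in> Hcheck W" using xi build_Hcheck by simp
  moreover have "\<forall>k. seqof W \<xi> (Suc (Suc k)) = (2-l) * seqof W \<xi> (Suc k) - seqof W \<xi> k"
    by (simp add: S)
  moreover have "\<xi> c0p = (if W = D_half_inf then a else 0)" "\<xi> c0m = (if W = D_half_inf then b else 0)"
    "\<xi> (c1 1) = x1"
    by (simp_all add: xi build_def)
  ultimately show "\<xi> \<in> Hcheck_eig W l" unfolding eig_iff using D by simp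
qed


lemma l2_tend:
  assumes "\<xi> \<in> Hbar W"
  shows "(\<lambda>k. (cmod (\<xi> (pos (Suc k))))\<^sup>2) \<longlonglongrightarrow> 0"
proof -
  let ?g = "\<lambda>c. (cmod (\<xi> c))\<^sup>2"
  have s: "?g summable_on CW W" using assms by (simp add: Hbar_def)
  have sub: "range (pos \<circ> Suc) \<subseteq> CW W"
  proof
    fix c assume "c \<in> range (pos \<circ> Suc)"
    then obtain k where c: "c = pos (Suc k)" by auto
    show "c \<in> CW W"
    proof (cases "even k")
      case True then obtain m where "k = 2*m" by (auto elim: evenE)
      then show ?thesis using c by simp
    next
      case False then obtain m where "k = Suc (2*m)" by (auto elim: oddE)
      then have "Suc k = 2 * Suc m" by simp
      then show ?thesis using c by (simp only: pos_even) simp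
    qed
  qed
  have "?g summable_on range (pos \<circ> Suc)"
    by (rule summable_on_subset_banach[OF s sub])
  moreover have "inj (pos \<circ> Suc)" using inj_pos by (simp add: inj_compose)
  ultimately have "(?g \<circ> (pos \<circ> Suc)) summable_on UNIV"
    using summable_on_reindex by blast
  then have "summable (\<lambda>k. (cmod (\<xi> (pos (Suc k))))\<^sup>2)"
    by (subst summable_on_UNIV_nonneg_real_iff[symmetric]) (auto simp: o_def)
  then show ?thesis by (rule summable_LIMSEQ_zero)
qed

lemma cmod_prod_le: "cmod (x * y) \<le> ((cmod x)\<^sup>2 + (cmod y)\<^sup>2) / 2"
proof -
  have "0 \<le> (cmod x - cmod y)\<^sup>2" by simp
  then show ?thesis by (simp add: norm_mult power2_eq_square algebra_simps)
qed

lemma wronsk: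
  fixes y :: "nat \<Rightarrow> complex"
  assumes R: "\<And>k. y (Suc (Suc k)) = \<mu> * y (Suc k) - y k"
    and T: "(\<lambda>k. (cmod (y (Suc k)))\<^sup>2) \<longlonglongrightarrow> 0"
  shows "y 0 * y 2 = (y 1)\<^sup>2"
proof -
  define Wr where "Wr k = y k * y (Suc (Suc k)) - (y (Suc k))\<^sup>2" for k
  have step: "Wr (Suc k) = Wr k" for k
    unfolding Wr_def R[of "Suc k"] R[of k] by (simp add: power2_eq_square algebra_simps)
  have const: "Wr k = Wr 0" for k by (induction k) (simp_all add: step)
  define f where "f k = (cmod (y (Suc k)))\<^sup>2" for k
  define g where "g k = (f k + f (k+2)) / 2 + f (k+1)" for k
  have f0: "f \<longlonglongrightarrow> 0" using T unfolding f_def by (simp only:)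
  have "g \<longlonglongrightarrow> (0 + 0) / 2 + 0"
    unfolding g_def
    by (intro tendsto_intros f0 LIMSEQ_ignore_initial_segment[OF f0]) simp
  then have g0: "g \<longlonglongrightarrow> 0" by simp
  have le: "cmod (Wr 0) \<le> g k" for k
  proof -
    have "cmod (Wr 0) = cmod (y (Suc k) * y (Suc (Suc (Suc k))) - (y (Suc (Suc k)))\<^sup>2)"
      using const[of "Suc k"] by (simp add: Wr_def)
    also have "\<dots> \<le> cmod (y (Suc k) * y (Suc (Suc (Suc k)))) + cmod ((y (Suc (Suc k)))\<^sup>2)"
      by (rule norm_triangle_ineq4)
    also have "\<dots> \<le> (f k + f (k+2)) / 2 + f (k+1)"
      using cmod_prod_le[of "y (Suc k)" "y (Suc (Suc (Suc k)))"]
      by (simp add: f_def norm_power)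
    finally show ?thesis by (simp add: g_def)
  qed
  have "cmod (Wr 0) \<le> 0"
    by (rule LIMSEQ_le_const[OF g0]) (use le in auto)
  then have "Wr 0 = 0" by simp
  then show ?thesis by (simp add: Wr_def numeral_2_eq_2)
qed


lemma rec_scale: "rec \<mu> (t*a) (t*b) k = t * rec \<mu> a b k"
proof -
  have "rec \<mu> (t*a) (t*b) k = t * rec \<mu> a b k \<and> rec \<mu> (t*a) (t*b) (Suc k) = t * rec \<mu> a b (Suc k)"
    by (induction k) (auto simp: algebra_simps)
  then show ?thesis by blast
qed

lemma rec_add: "rec \<mu> (a+a') (b+b') k = rec \<mu> a b k + rec \<mu> a' b' k"
proof -
  have "rec \<mu> (a+a') (b+b') k = rec \<mu> a b k + rec \<mu> a' b' k \<and>
        rec \<mu> (a+a') (b+b') (Suc k) = rec \<mu> a b (Suc k) + rec \<mu> a' b' (Suc k)"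
    by (induction k) (auto simp: algebra_simps)
  then show ?thesis by blast
qed

lemma build_scale: "build W \<mu> (t*a) (t*b) (t*x) = cscale t (build W \<mu> a b x)"
proof
  fix c
  have e: "t*a + t*b = t*(a+b)" by (simp add: algebra_simps)
  show "build W \<mu> (t*a) (t*b) (t*x) c = cscale t (build W \<mu> a b x) c"
    by (cases c) (simp_all add: build_def cscale_def e rec_scale)
qed

lemma build_add: "build W \<mu> (a+a') (b+b') (x+x') = build W \<mu> a b x + build W \<mu> a' b' x'"
proof
  fix c
  have e: "a + a' + (b + b') = (a+b) + (a'+b')" by (simp add: algebra_simps)
  show "build W \<mu> (a+a') (b+b') (x+x') c = (build W \<mu> a b x + build W \<mu> a' b' x') c"
    by (cases c) (simp_all add: build_def e rec_add)
qed

lemma build_zero: "build W \<mu> 0 0 0 = 0"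
proof
  fix c show "build W \<mu> 0 0 0 c = 0 c" by (cases c) (simp_all add: build_def)
qed

lemma gvec: "build D_half_inf 0 t (-t) 0 = cscale t (gamma c0p - gamma c0m)"
proof
  fix c show "build D_half_inf 0 t (-t) 0 c = cscale t (gamma c0p - gamma c0m) c"
    by (cases c) (simp_all add: build_def cscale_def gamma_def)
qed

lemma hbar_main:
  assumes "\<xi> \<in> Hbar_eig W l"
  shows "(\<not> (W = D_half_inf \<and> l = 2) \<longrightarrow> \<xi> = 0) \<and>
         (W = D_half_inf \<and> l = 2 \<longrightarrow> (\<exists>t. \<xi> = cscale t (gamma c0p - gamma c0m)))"
proof -
  have E1: "\<xi> \<in> Hcheck_eig W l" and HB: "\<xi> \<in> Hbar W" using assms by (auto simp: Hbar_eig_def)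
  define \<mu> where "\<mu> = 2 - l"
  obtain a b x1 where xi: "\<xi> = build W \<mu> a b x1"
    and D: "W = D_half_inf \<longrightarrow> \<mu>*a = x1 \<and> \<mu>*b = x1" and A: "W = A_half_inf \<longrightarrow> a = 0 \<and> b = 0"
    using E1 unfolding char \<mu>_def by blast
  define y where "y = seqof W \<xi>"
  have Y: "y k = rec \<mu> (a+b) x1 k" for k using seqof_build[OF A] xi y_def by simp
  have R: "y (Suc (Suc k)) = \<mu> * y (Suc k) - y k" for k by (simp add: Y)
  have T: "(\<lambda>k. (cmod (y (Suc k)))\<^sup>2) \<longlonglongrightarrow> 0"
    using l2_tend[OF HB] by (simp add: y_def seqof_def)
  have "y 0 * y 2 = (y 1)\<^sup>2" by (rule wronsk[OF R T])
  then have E: "(a+b) * (\<mu> * x1 - (a+b)) = x1\<^sup>2" by (simp add: Y numeral_2_eq_2)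
  show ?thesis
  proof (cases W)
    case A_half_inf
    with A have "a = 0" "b = 0" by auto
    with E have "x1 = 0" by simp
    then show ?thesis using xi \<open>a = 0\<close> \<open>b = 0\<close> A_half_inf by (simp add: build_zero)
  next
    case D_half_inf
    show ?thesis
    proof (cases "l = 2")
      case True
      then have m0: "\<mu> = 0" by (simp add: \<mu>_def)
      then have "x1 = 0" using D D_half_inf by simp
      have E0: "(a+b) * (0 * 0 - (a+b)) = 0^2" using E m0 \<open>x1 = 0\<close> by (simp only:)
      have "(a+b)*(a+b) = -((a+b) * (0 * 0 - (a+b)))" by (simp add: algebra_simps)
      also have "\<dots> = 0" unfolding E0 by simp
      finally have "(a+b)*(a+b) = 0" .
      then have "a + b = 0" by simp
      then have "b = -a" using add_eq_0_iff by blast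
      then have "\<xi> = cscale a (gamma c0p - gamma c0m)"
        using xi m0 \<open>x1 = 0\<close> D_half_inf gvec by simp
      then show ?thesis using True D_half_inf by blast
    next
      case False
      then have mn: "\<mu> \<noteq> 0" by (simp add: \<mu>_def)
      have ab: "a = x1 / \<mu>" "b = x1 / \<mu>" using D D_half_inf mn by (auto simp: field_simps)
      have x0: "x1 = 0"
      proof (rule ccontr)
        assume nz: "x1 \<noteq> 0"
        from E ab have "\<mu>^2 * ((2*x1/\<mu>) * (\<mu>*x1 - 2*x1/\<mu>)) = \<mu>^2 * x1^2"
          by (simp add: algebra_simps)
        then have "x1^2 * (\<mu>^2 - 4) = 0" using mn
          by (simp add: field_simps power2_eq_square)
        then have m4: "\<mu>^2 = 4" using nz by simp
        have y0: "y 0 = 2 * x1 / \<mu>" using ab by (simp add: Y)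
        have geo: "y k = (\<mu>/2)^k * y 0" for k
        proof -
          have "y k = (\<mu>/2)^k * y 0 \<and> y (Suc k) = (\<mu>/2)^(Suc k) * y 0"
          proof (induction k)
            case 0 show ?case using y0 mn by (simp add: Y)
          next
            case (Suc k)
            have "y (Suc (Suc k)) = \<mu> * ((\<mu>/2)^(Suc k) * y 0) - (\<mu>/2)^k * y 0"
              using R[of k] Suc by simp
            also have "\<dots> = (\<mu>/2)^k * y 0 * (\<mu>^2/2 - 1)" by (simp add: power2_eq_square algebra_simps)
            also have "\<dots> = (\<mu>/2)^k * y 0" using m4 by simp
            also have "\<dots> = (\<mu>/2)^(Suc (Suc k)) * y 0"
              using m4 by (simp add: power2_eq_square field_simps)
            finally show ?case using Suc by simp
          qed
          then show ?thesis by blast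
        qed
        have "cmod (\<mu>^2) = 4" using m4 by simp
        then have "(cmod \<mu>)^2 = 2^2" by (simp add: norm_power)
        then have c2: "cmod \<mu> = 2" using power2_eq_imp_eq[of "cmod \<mu>" 2] by simp
        have "(cmod (y (Suc k)))\<^sup>2 = (cmod (y 0))\<^sup>2" for k
        proof -
          have e: "y (Suc k) = (\<mu>/2)^(Suc k) * y 0" by (rule geo)
          have "cmod (y (Suc k)) = cmod ((\<mu>/2)^(Suc k)) * cmod (y 0)" unfolding e by (rule norm_mult)
          moreover have "cmod ((\<mu>/2)^(Suc k)) = 1" using c2 by (simp only: norm_power norm_divide) simp
          ultimately show ?thesis by simp
        qed
        with T have "(\<lambda>k. (cmod (y 0))\<^sup>2) \<longlonglongrightarrow> 0" by simp
        then have "(cmod (y 0))\<^sup>2 = 0" by (simp add: LIMSEQ_const_iff)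
        then have "y 0 = 0" by simp
        then show False using y0 mn nz by simp
      qed
      then have "\<xi> = 0" using xi ab by (simp add: build_zero)
      then show ?thesis using False by simp
    qed
  qed
qed


lemma cdim1: assumes "v \<noteq> 0" "S = range (\<lambda>t. cscale t v)" shows "cdim S = 1"
proof -
  have "S = V.span {v}" using assms(2) by (simp add: V.span_singleton)
  then have "cdim S = V.dim {v}" by (simp add: cdim_def)
  also have "\<dots> = card {v}" by (rule V.dim_eq_card_independent) (simp add: assms(1))
  finally show ?thesis by simp
qed

lemma cdim0: assumes "S = {0}" shows "cdim S = 0"
proof -
  have "cdim S = V.dim (V.span {})" using assms by (simp add: cdim_def)
  also have "\<dots> = 0" by (simp only: V.dim_span V.dim_eq_card_independent[OF V.independent_empty] card.empty)
  finally show ?thesis .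
qed

lemma cdim2: assumes "V.independent {u, w}" "u \<noteq> w" "S = V.span {u, w}" shows "cdim S = 2"
proof -
  have "cdim S = V.dim {u, w}" using assms(3) by (simp add: cdim_def)
  also have "\<dots> = card {u, w}" by (rule V.dim_eq_card_independent[OF assms(1)])
  finally show ?thesis using assms(2) by simp
qed

lemma zero_Hbar_eig: "0 \<in> Hbar_eig W l"
proof -
  have "0 = build W (2-l) 0 0 0" by (simp add: build_zero)
  then have "0 \<in> Hcheck_eig W l" unfolding char by force
  moreover have "0 \<in> Hbar W" by (simp add: Hbar_def Hcheck_def)
  ultimately show ?thesis by (simp add: Hbar_eig_def)
qed

lemma g_Hbar_eig: "cscale t (gamma c0p - gamma c0m) \<in> Hbar_eig D_half_inf 2"
proof -
  have "cscale t (gamma c0p - gamma c0m) \<in> Hcheck_eig D_half_inf 2"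
    unfolding char gvec[symmetric] by force
  moreover have "cscale t (gamma c0p - gamma c0m) \<in> Hcheck D_half_inf"
    using calculation by (simp add: Hcheck_eig_def)
  moreover have "(\<lambda>c. (cmod (cscale t (gamma c0p - gamma c0m) c))\<^sup>2) summable_on CW D_half_inf"
  proof -
    have "(\<lambda>c. (cmod (cscale t (gamma c0p - gamma c0m) c))\<^sup>2) summable_on {c0p, c0m}" by simp
    moreover have "(\<lambda>c. (cmod (cscale t (gamma c0p - gamma c0m) c))\<^sup>2) summable_on {c0p, c0m}
       \<longleftrightarrow> (\<lambda>c. (cmod (cscale t (gamma c0p - gamma c0m) c))\<^sup>2) summable_on CW D_half_inf"
      by (rule summable_on_cong_neutral) (auto simp: cscale_def gamma_def)
    ultimately show ?thesis by simp
  qed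
  ultimately show ?thesis by (simp add: Hbar_eig_def Hbar_def)
qed

theorem mainTheorem9:
  fixes W :: wtype and l :: complex
  shows "(\<not> (W = D_half_inf \<and> l = 2) \<longrightarrow>
            cdim (Hcheck_eig W l) = 1 \<and> cdim (Hbar_eig W l) = 0)
       \<and> (W = D_half_inf \<and> l = 2 \<longrightarrow>
            cdim (Hcheck_eig W 2) = 2 \<and> cdim (Hbar_eig W 2) = 1 \<and>
            Hbar_eig W 2 = cspan {gamma c0p - gamma c0m})"
proof (cases "W = D_half_inf \<and> l = 2")
  case False
  define \<mu> where "\<mu> = 2 - l"
  have bar: "Hbar_eig W l = {0}"
    using hbar_main[of _ W l] False zero_Hbar_eig by blast
  have "\<exists>v. v \<noteq> 0 \<and> Hcheck_eig W l = range (\<lambda>t. cscale t v)"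
  proof (cases W)
    case A_half_inf
    define v where "v = build A_half_inf \<mu> 0 0 1"
    have v1: "v (c1 1) = 1" by (simp add: v_def build_def)
    have bv: "build A_half_inf \<mu> 0 0 t = cscale t v" for t
      using build_scale[of A_half_inf \<mu> t 0 0 1] by (simp add: v_def)
    have "Hcheck_eig W l = range (\<lambda>t. cscale t v)"
      unfolding char A_half_inf \<mu>_def[symmetric] by (auto simp: bv)
    moreover have "v \<noteq> 0" using v1 by auto
    ultimately show ?thesis by blast
  next
    case D_half_inf
    with False have mn: "\<mu> \<noteq> 0" by (simp add: \<mu>_def)
    define v where "v = build D_half_inf \<mu> (1/\<mu>) (1/\<mu>) 1"
    have v1: "v (c1 1) = 1" by (simp add: v_def build_def)
    have bv: "build D_half_inf \<mu> (t/\<mu>) (t/\<mu>) t = cscale t v" for t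
      using build_scale[of D_half_inf \<mu> t "1/\<mu>" "1/\<mu>" 1] by (simp add: v_def)
    have "Hcheck_eig W l = range (\<lambda>t. cscale t v)"
      unfolding char D_half_inf \<mu>_def[symmetric]
    proof (intro set_eqI iffI)
      fix x assume "x \<in> {build D_half_inf \<mu> a b x1 |a b x1.
          (D_half_inf = D_half_inf \<longrightarrow> \<mu> * a = x1 \<and> \<mu> * b = x1) \<and> (D_half_inf = A_half_inf \<longrightarrow> a = 0 \<and> b = 0)}"
      then obtain a b x1 where "x = build D_half_inf \<mu> a b x1" "\<mu> * a = x1" "\<mu> * b = x1" by auto
      then have "a = x1/\<mu>" "b = x1/\<mu>" "x = build D_half_inf \<mu> a b x1" using mn by (auto simp: field_simps)
      then show "x \<in> range (\<lambda>t. cscale t v)" using bv by auto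
    next
      fix x assume "x \<in> range (\<lambda>t. cscale t v)"
      then obtain t where "x = cscale t v" by auto
      then have xe: "x = build D_half_inf \<mu> (t/\<mu>) (t/\<mu>) t" using bv by simp
      have me: "\<mu> * (t/\<mu>) = t" using mn by simp
      show "x \<in> {build D_half_inf \<mu> a b x1 |a b x1.
          (D_half_inf = D_half_inf \<longrightarrow> \<mu> * a = x1 \<and> \<mu> * b = x1) \<and> (D_half_inf = A_half_inf \<longrightarrow> a = 0 \<and> b = 0)}"
        using xe me by blast
    qed
    moreover have "v \<noteq> 0" using v1 by auto
    ultimately show ?thesis by blast
  qed
  then obtain v where "v \<noteq> 0" "Hcheck_eig W l = range (\<lambda>t. cscale t v)" by blast
  then have "cdim (Hcheck_eig W l) = 1" by (rule cdim1)
  moreover have "cdim (Hbar_eig W l) = 0" using bar by (rule cdim0)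
  ultimately show ?thesis using False by blast
next
  case True
  then have W: "W = D_half_inf" and l: "l = 2" by auto
  define g where "g = gamma c0p - gamma c0m"
  have g1: "g c0p = 1" by (simp add: g_def gamma_def)
  have bar: "Hbar_eig W 2 = range (\<lambda>t. cscale t g)"
    using hbar_main[of _ W 2] W g_Hbar_eig unfolding g_def by auto
  have sp: "cspan {g} = range (\<lambda>t. cscale t g)" by (simp add: cspan_def V.span_singleton)
  have d1: "cdim (Hbar_eig W 2) = 1" by (rule cdim1[OF _ bar]) (use g1 in auto)
  define u where "u = build D_half_inf 0 1 0 0"
  define w where "w = build D_half_inf 0 0 1 0"
  have uv: "u c0p = 1" "u c0m = 0" "w c0p = 0" "w c0m = 1" by (simp_all add: u_def w_def build_def)
  have lin: "build D_half_inf 0 a b 0 = cscale a u + cscale b w" for a b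
  proof -
    have "build D_half_inf 0 a b 0 = build D_half_inf 0 (a*1 + b*0) (a*0 + b*1) (a*0 + b*0)" by simp
    also have "\<dots> = cscale a u + cscale b w"
      unfolding build_add build_scale u_def w_def ..
    finally show ?thesis .
  qed
  have ch: "Hcheck_eig W 2 = V.span {u, w}"
  proof (intro set_eqI iffI)
    fix x assume "x \<in> Hcheck_eig W 2"
    then obtain a b where "x = build D_half_inf 0 a b 0" unfolding char W by auto
    then have "x = cscale a u + cscale b w" by (simp add: lin)
    then show "x \<in> V.span {u, w}"
      by (simp add: V.span_add V.span_scale V.span_base)
  next
    fix x assume "x \<in> V.span {u, w}"
    then obtain k where "x - cscale k u \<in> V.span {w}" using V.span_breakdown_eq by blast
    then obtain t where "x - cscale k u = cscale t w" by (auto simp: V.span_singleton)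
    then have "x = build D_half_inf 0 k t 0" by (simp add: lin algebra_simps)
    then show "x \<in> Hcheck_eig W 2" unfolding char W by force
  qed
  have uw: "u \<noteq> w" using uv by auto
  have wn: "w \<noteq> 0" using uv by auto
  have "u \<notin> V.span {w}"
  proof
    assume "u \<in> V.span {w}"
    then obtain t where "u = cscale t w" by (auto simp: V.span_singleton)
    then have "u c0p = t * w c0p" by (simp add: cscale_def)
    then show False using uv by simp
  qed
  then have ind: "V.independent {u, w}" using uw wn by (simp add: V.independent_insert)
  have d2: "cdim (Hcheck_eig W 2) = 2" by (rule cdim2[OF ind uw ch])
  show ?thesis using d1 d2 bar sp W l by (simp add: g_def)
qed

end
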